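(* Let $f,g\in\mathbb{F}[Y,Z]$. If $g=\sum_{i\in[r]}g_ih_i$ with $g_i\in\mathbb{F}[Y]$ and $h_i\in\mathbb{F}[Z]$, then $\mathrm{maxrank}(M_{fg})\le r\cdot\mathrm{maxrank}(M_f)$.
   Context: $\mathbb{F}$ is a field, $Y=\{y_1,\dots,y_m\}$ and $Z=\{z_1,\dots,z_m\}$ are disjoint sets of variables. For $f\in\mathbb{F}[Y,Z]$, the polynomial coefficient matrix $M_f$ is the $2^m\times 2^m$ matrix with entries in $\mathbb{F}[Y,Z]$, rows indexed by monic multilinear monomials $p$ in $Y$ and columns by monic multilinear monomials $q$ in $Z$, where $M_f(p,q)=G$ if and only if $f$ can be uniquely written as $f=pq\,G+Q$ with $G$ containing no variable other than those present in $p$ and $q$, and $Q$ having no monomial which is divisible by $pq$ and contains only variables present in $p$ and $q$. For $S:Y\cup Z\to\mathbb{F}$, $M_f|_S$ is obtained by evaluating each entry at $S$, and $\mathrm{maxrank}(M_f)=\max_S\mathrm{rank}(M_f|_S)$. *)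

theory Defs
  imports "HOL-Library.Poly_Mapping" "Jordan_Normal_Form.DL_Rank"
begin

text \<open>Variables: Yv i stands for y_(i+1), Zv i for z_(i+1), i < m.\<close>
datatype var = Yv nat | Zv nat

type_synonym 'a mpoly = "(var \<Rightarrow>\<^sub>0 nat) \<Rightarrow>\<^sub>0 'a"

definition vars :: "'a::zero mpoly \<Rightarrow> var set" where
  "vars p = (\<Union>\<alpha>\<in>Poly_Mapping.keys p. Poly_Mapping.keys \<alpha>)"

definition Yvars :: "nat \<Rightarrow> var set" where "Yvars m = Yv ` {..<m}"
definition Zvars :: "nat \<Rightarrow> var set" where "Zvars m = Zv ` {..<m}"

definition eval :: "(var \<Rightarrow> 'a::comm_semiring_1) \<Rightarrow> 'a mpoly \<Rightarrow> 'a" where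
  "eval S p = (\<Sum>\<alpha>\<in>Poly_Mapping.keys p.
       Poly_Mapping.lookup p \<alpha> * (\<Prod>v\<in>Poly_Mapping.keys \<alpha>. S v ^ Poly_Mapping.lookup \<alpha> v))"

definition mlmon :: "var set \<Rightarrow> (var \<Rightarrow>\<^sub>0 nat)" where
  "mlmon V = (\<Sum>v\<in>V. Poly_Mapping.single v 1)"

text \<open>Row/column index k < 2^m encodes the subset {i<m. bit k i}.\<close>
definition idxset :: "nat \<Rightarrow> nat \<Rightarrow> nat set" where
  "idxset m k = {i. i < m \<and> bit k i}"

text \<open>Entry M_f(p,q) for p = prod_{i in P} y_i and q = prod_{j in Q} z_j:
  the unique G with vars G within those of p q, f = p q G + R, and no monomial of R
  divisible by p q and containing only variables of p q.\<close>
definition coeffM :: "'a::comm_ring_1 mpoly \<Rightarrow> nat set \<Rightarrow> nat set \<Rightarrow> 'a mpoly" where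
  "coeffM f P Q = (let V = Yv ` P \<union> Zv ` Q in
     THE G. vars G \<subseteq> V \<and>
       (\<exists>R. f = Poly_Mapping.single (mlmon V) 1 * G + R \<and>
            (\<forall>\<beta>\<in>Poly_Mapping.keys R. \<not> ((\<forall>v. Poly_Mapping.lookup (mlmon V) v \<le> Poly_Mapping.lookup \<beta> v) \<and> Poly_Mapping.keys \<beta> \<subseteq> V))))"

definition Meval :: "nat \<Rightarrow> 'a::field mpoly \<Rightarrow> (var \<Rightarrow> 'a) \<Rightarrow> 'a mat" where
  "Meval m f S = mat (2^m) (2^m) (\<lambda>(k, l). eval S (coeffM f (idxset m k) (idxset m l)))"

definition maxrank :: "nat \<Rightarrow> 'a::field mpoly \<Rightarrow> nat" where
  "maxrank m f = Max {vec_space.rank (2^m) (Meval m f S) | S. True}"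

end

theory Submission
  imports Defs
begin


lemma rank_mult_left_le:
  fixes A :: "'a::field mat"
  assumes A: "A \<in> carrier_mat n k" and M: "M \<in> carrier_mat k nc"
  shows "vec_space.rank n (A * M) \<le> vec_space.rank k M"
proof -
  interpret Vn: vec_space "TYPE('a)" n .
  interpret Vk: vec_space "TYPE('a)" k .
  have AM: "A*M \<in> carrier_mat n nc" using A M by simp
  obtain U where U: "maximal U (\<lambda>T. T \<subseteq> set (cols (A*M)) \<and> Vn.lin_indpt T)"
    using maximal_exists[of "(\<lambda>T. T \<subseteq> set (cols (A*M)) \<and> Vn.lin_indpt T)" "card (set (cols (A*M)))" "{}"]
    by (meson List.finite_set card_mono empty_iff empty_subsetI Vn.finite_lin_indpt2 rev_finite_subset)
  have rk: "Vn.rank (A*M) = card U" by (rule Vn.rank_card_indpt[OF AM U])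
  have Usub: "U \<subseteq> set (cols (A*M))" and Uind: "Vn.lin_indpt U" using U unfolding maximal_def by auto
  have finU: "finite U" using Usub finite_subset by blast
  define pre where "pre u = col M (SOME j. j < nc \<and> u = col (A*M) j)" for u
  have pre: "pre u \<in> set (cols M) \<and> A *\<^sub>v pre u = u" if "u \<in> U" for u
  proof -
    from that Usub have "u \<in> set (cols (A*M))" by blast
    then obtain j where j0: "j < length (cols (A*M))" "u = cols (A*M) ! j"
      unfolding in_set_conv_nth by blast
    have j: "j < nc" "u = col (A*M) j" using j0 AM by auto
    hence ex: "\<exists>j. j < nc \<and> u = col (A*M) j" by blast
    define j' where "j' = (SOME j. j < nc \<and> u = col (A*M) j)"
    have j': "j' < nc" "u = col (A*M) j'" using someI_ex[OF ex] unfolding j'_def by auto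
    have "pre u = col M j'" unfolding pre_def j'_def by simp
    moreover have "col M j' \<in> set (cols M)" proof -
      have "cols M ! j' = col M j'" using j' M by simp
      moreover have "j' < length (cols M)" using j' M by simp
      ultimately show ?thesis by (metis nth_mem)
    qed
    moreover have "A *\<^sub>v col M j' = u" using j' A M by (simp add: mult_mat_vec_def)
    ultimately show ?thesis by simp
  qed
  have inj: "inj_on pre U"
  proof (rule inj_onI)
    fix x y assume "x \<in> U" "y \<in> U" "pre x = pre y"
    then show "x = y" using pre[of x] pre[of y] by metis
  qed
  have card: "card (pre ` U) = card U" using card_image[OF inj] .
  have sub: "pre ` U \<subseteq> set (cols M)" using pre by auto
  have subc: "pre ` U \<subseteq> carrier_vec k" using sub M cols_dim by blast
  have Usubc: "U \<subseteq> carrier_vec n" using Usub AM cols_dim by blast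
  have ind: "Vk.lin_indpt (pre ` U)"
  proof (rule Vk.finite_lin_indpt2, goal_cases)
    case 1 show ?case using finU by simp
  next
    case 2 show ?case using subc by simp
  next
    case (3 a)
    hence lc: "Vk.lincomb a (pre ` U) = 0\<^sub>v k" by simp
    define b where "b = a \<circ> pre"
    have eq: "Vn.lincomb b U = A *\<^sub>v Vk.lincomb a (pre ` U)"
    proof (rule eq_vecI)
      show "dim_vec (Vn.lincomb b U) = dim_vec (A *\<^sub>v Vk.lincomb a (pre ` U))"
        using Vn.lincomb_dim[OF finU Usubc] A by simp
      fix i assume "i < dim_vec (A *\<^sub>v Vk.lincomb a (pre ` U))"
      hence i: "i < n" using A by simp
      have "Vn.lincomb b U $ i = (\<Sum>u\<in>U. b u * u $ i)" by (rule Vn.lincomb_index[OF i Usubc])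
      also have "\<dots> = (\<Sum>u\<in>U. a (pre u) * (A *\<^sub>v pre u) $ i)"
        by (rule sum.cong) (auto simp: b_def pre)
      also have "\<dots> = (\<Sum>w\<in>pre ` U. a w * (A *\<^sub>v w) $ i)"
        by (rule sum.reindex[OF inj, symmetric, unfolded comp_def])
      also have "\<dots> = (\<Sum>w\<in>pre ` U. a w * (\<Sum>l<k. A $$ (i,l) * w $ l))"
        apply (rule sum.cong, simp)
        using subc A i by (auto simp: mult_mat_vec_def scalar_prod_def atLeast0LessThan)
      also have "\<dots> = (\<Sum>l<k. A $$ (i,l) * (\<Sum>w\<in>pre ` U. a w * w $ l))"
        by (simp add: sum_distrib_left sum_distrib_right mult_ac sum.swap[of _ "{..<k}"])
      also have "\<dots> = (\<Sum>l<k. A $$ (i,l) * Vk.lincomb a (pre ` U) $ l)"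
        by (rule sum.cong, simp, subst Vk.lincomb_index, auto simp: subc)
      also have "\<dots> = (A *\<^sub>v Vk.lincomb a (pre ` U)) $ i"
      proof -
        have ld: "dim_vec (Vk.lincomb a (pre ` U)) = k" using Vk.lincomb_dim[of "pre ` U" a] subc finU by auto
        show ?thesis using A i unfolding mult_mat_vec_def scalar_prod_def ld
          by (auto simp: atLeast0LessThan)
      qed
      finally show "Vn.lincomb b U $ i = (A *\<^sub>v Vk.lincomb a (pre ` U)) $ i" .
    qed
    have "A *\<^sub>v 0\<^sub>v k = 0\<^sub>v n" using A by (intro eq_vecI) (auto simp: mult_mat_vec_def)
    hence "Vn.lincomb b U = 0\<^sub>v n" using eq lc A by simp
    moreover have "b \<in> U \<rightarrow> carrier class_ring" by simp
    ultimately have "b \<in> U \<rightarrow> {\<zero>\<^bsub>class_ring\<^esub>}"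
      using Vn.not_lindepD[OF Uind finU subset_refl] by simp
    thus ?case unfolding b_def by auto
  qed
  have "card (pre ` U) \<le> Vk.rank M" by (rule Vk.rank_ge_card_indpt[OF M sub ind])
  thus ?thesis using rk card by simp
qed

lemma rank_mult_right_le:
  fixes A :: "'a::field mat"
  assumes A: "A \<in> carrier_mat n k" and B: "B \<in> carrier_mat k nc"
  shows "vec_space.rank n (A * B) \<le> vec_space.rank n A"
proof -
  interpret Vn: vec_space "TYPE('a)" n .
  define W where "W = Vn.span (set (cols A))"
  have AB: "A*B \<in> carrier_mat n nc" using A B by simp
  have colsA: "set (cols A) \<subseteq> carrier_vec n" using A cols_dim by blast
  have colsAB: "set (cols (A*B)) \<subseteq> carrier_vec n" using AB cols_dim by blast
  have incl: "set (cols (A*B)) \<subseteq> W"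
  proof
    fix x assume "x \<in> set (cols (A*B))"
    then obtain j where j0: "j < length (cols (A*B))" "x = cols (A*B) ! j"
      unfolding in_set_conv_nth by blast
    have j: "j < nc" "x = A *\<^sub>v col B j" using j0 A B by auto
    have "col B j \<in> carrier_vec k" using B j by simp
    hence "x \<in> Vn.col_space A" unfolding Vn.col_space_eq[OF A] using j A by auto
    thus "x \<in> W" unfolding W_def Vn.col_space_def .
  qed
  have subW: "subspace class_ring W Vn.V" unfolding W_def using Vn.span_is_subspace[OF colsA] .
  have subAB: "subspace class_ring (Vn.span (set (cols (A*B)))) Vn.V" using Vn.span_is_subspace[OF colsAB] .
  have "Vn.span (set (cols (A*B))) \<subseteq> W"
    using Vn.span_is_subset[OF incl] subW unfolding subspace_def by blast
  hence nest: "subspace class_ring (Vn.span (set (cols (A*B)))) (Vn.vs W)"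
    using Vn.nested_subspaces[OF subW subAB] by blast
  have fW: "vectorspace.fin_dim class_ring (Vn.vs W)" unfolding W_def using Vn.fin_dim_span_cols[OF A] .
  have fAB: "vectorspace.fin_dim class_ring (Vn.vs (Vn.span (set (cols (A*B)))))" using Vn.fin_dim_span_cols[OF AB] .
  show ?thesis unfolding Vn.rank_def W_def[symmetric]
    using vectorspace.subspace_dim[OF Vn.subspace_is_vs[OF subW] nest fW] fAB by auto
qed



abbreviation lk where "lk \<equiv> Poly_Mapping.lookup"
abbreviation ks where "ks \<equiv> Poly_Mapping.keys"
abbreviation sg where "sg \<equiv> Poly_Mapping.single"

definition pmle :: "(var \<Rightarrow>\<^sub>0 nat) \<Rightarrow> (var \<Rightarrow>\<^sub>0 nat) \<Rightarrow> bool" where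
  "pmle a b = (\<forall>v. lk a v \<le> lk b v)"

lemma pm_add_eq: "(\<alpha> = m + q) \<longleftrightarrow> (pmle m \<alpha> \<and> q = \<alpha> - m)" for \<alpha> m q :: "var \<Rightarrow>\<^sub>0 nat"
  unfolding pmle_def poly_mapping_eq_iff fun_eq_iff lookup_add lookup_minus by auto

lemma lookup_single_mult:
  "lk (sg m (1::'a::comm_semiring_1) * p) \<alpha> = (if pmle m \<alpha> then lk p (\<alpha> - m) else 0)"
proof -
  have "lk (sg m (1::'a) * p) \<alpha> = (\<Sum>q. lk p q when \<alpha> = m + q)"
    unfolding lookup_mult lookup_single by (simp add: when_mult)
  also have "\<dots> = (if pmle m \<alpha> then lk p (\<alpha> - m) else 0)"
    unfolding pm_add_eq by (cases "pmle m \<alpha>") (simp_all add: when_def)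
  finally show ?thesis .
qed

lemma lookup_mlmon: "finite V \<Longrightarrow> lk (mlmon V) v = (if v \<in> V then 1 else 0)"
  unfolding mlmon_def lookup_sum lookup_single by (simp add: when_def)

lemma keys_mlmon: "finite V \<Longrightarrow> ks (mlmon V) = V"
  by (auto simp: in_keys_iff lookup_mlmon split: if_splits)

lemma keys_add_nat: "ks (\<alpha> + \<beta>) = ks \<alpha> \<union> ks (\<beta> :: var \<Rightarrow>\<^sub>0 nat)"
  by (auto simp: in_keys_iff lookup_add)

lemma keys_minus_nat: "ks (\<alpha> - \<beta>) \<subseteq> ks (\<alpha> :: var \<Rightarrow>\<^sub>0 nat)"
  by (auto simp: in_keys_iff lookup_minus)

lemma minus_add_pm: "pmle m \<alpha> \<Longrightarrow> \<alpha> - m + m = (\<alpha> :: var \<Rightarrow>\<^sub>0 nat)"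
  unfolding pmle_def poly_mapping_eq_iff fun_eq_iff lookup_add lookup_minus by auto

lemma add_minus_pm: "\<gamma> + m - m = (\<gamma> :: var \<Rightarrow>\<^sub>0 nat)"
  unfolding poly_mapping_eq_iff fun_eq_iff lookup_add lookup_minus by auto

lemma pmle_add: "pmle m (\<gamma> + m)"
  unfolding pmle_def lookup_add by auto

definition cmx :: "'a::comm_ring_1 mpoly \<Rightarrow> var set \<Rightarrow> 'a mpoly" where
  "cmx f V = Abs_poly_mapping (\<lambda>\<gamma>. if ks \<gamma> \<subseteq> V then lk f (\<gamma> + mlmon V) else 0)"

lemma lookup_cmx: "lk (cmx f V) \<gamma> = (if ks \<gamma> \<subseteq> V then lk f (\<gamma> + mlmon V) else 0)"
proof -
  have "{\<gamma>. (if ks \<gamma> \<subseteq> V then lk f (\<gamma> + mlmon V) else 0) \<noteq> 0} \<subseteq> (\<lambda>\<alpha>. \<alpha> - mlmon V) ` ks f"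
  proof
    fix \<gamma> assume "\<gamma> \<in> {\<gamma>. (if ks \<gamma> \<subseteq> V then lk f (\<gamma> + mlmon V) else 0) \<noteq> 0}"
    hence "\<gamma> + mlmon V \<in> ks f" by (auto simp: in_keys_iff split: if_splits)
    thus "\<gamma> \<in> (\<lambda>\<alpha>. \<alpha> - mlmon V) ` ks f" using add_minus_pm[of \<gamma> "mlmon V"] by force
  qed
  hence "finite {\<gamma>. (if ks \<gamma> \<subseteq> V then lk f (\<gamma> + mlmon V) else 0) \<noteq> 0}"
    by (rule finite_subset) simp
  thus ?thesis unfolding cmx_def by simp
qed

lemma coeffM_cmx:
  assumes "finite P" "finite Q"
  shows "coeffM f P Q = cmx f (Yv ` P \<union> Zv ` Q)"
proof -
  define V where "V = Yv ` P \<union> Zv ` Q"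
  have fV: "finite V" using assms unfolding V_def by simp
  define m where "m = mlmon V"
  have km: "ks m = V" unfolding m_def using keys_mlmon[OF fV] .
  have lm: "\<And>v. lk m v = (if v \<in> V then 1 else 0)" unfolding m_def using lookup_mlmon[OF fV] .
  let ?G = "cmx f V"
  define Pr where "Pr G = (vars G \<subseteq> V \<and> (\<exists>R. f = sg m 1 * G + R \<and>
     (\<forall>\<beta>\<in>ks R. \<not> ((\<forall>v. lk m v \<le> lk \<beta> v) \<and> ks \<beta> \<subseteq> V))))" for G
  have ex: "Pr ?G" unfolding Pr_def
  proof (intro conjI exI)
    show "vars ?G \<subseteq> V"
    proof
      fix v assume "v \<in> vars ?G"
      then obtain \<gamma> where g: "\<gamma> \<in> ks ?G" "v \<in> ks \<gamma>" unfolding vars_def by blast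
      from g(1) have "ks \<gamma> \<subseteq> V" unfolding in_keys_iff lookup_cmx by (auto split: if_splits)
      thus "v \<in> V" using g(2) by blast
    qed
    show "f = sg m 1 * ?G + (f - sg m 1 * ?G)" by simp
    show "\<forall>\<beta>\<in>ks (f - sg m 1 * ?G). \<not> ((\<forall>v. lk m v \<le> lk \<beta> v) \<and> ks \<beta> \<subseteq> V)"
    proof (intro ballI notI)
      fix \<beta> assume b: "\<beta> \<in> ks (f - sg m 1 * ?G)" and c: "(\<forall>v. lk m v \<le> lk \<beta> v) \<and> ks \<beta> \<subseteq> V"
      hence p: "pmle m \<beta>" unfolding pmle_def by simp
      have "ks (\<beta> - m) \<subseteq> V" using c keys_minus_nat[of \<beta> m] by blast
      hence "lk (f - sg m 1 * ?G) \<beta> = 0"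
        using p unfolding lookup_minus lookup_single_mult lookup_cmx m_def[symmetric]
        by (simp add: minus_add_pm)
      thus False using b by (simp add: in_keys_iff)
    qed
  qed
  have uniq: "G = ?G" if G: "Pr G" for G
  proof -
    from G[unfolded Pr_def] obtain R where vG: "vars G \<subseteq> V" and fR: "f = sg m 1 * G + R"
      and R: "\<forall>\<beta>\<in>ks R. \<not> ((\<forall>v. lk m v \<le> lk \<beta> v) \<and> ks \<beta> \<subseteq> V)" by blast
    show ?thesis
    proof (rule poly_mapping_eqI)
      fix \<gamma>
      show "lk G \<gamma> = lk ?G \<gamma>"
      proof (cases "ks \<gamma> \<subseteq> V")
        case True
        have "ks (\<gamma> + m) \<subseteq> V" using True km keys_add_nat[of \<gamma> m] by blast
        moreover have "\<forall>v. lk m v \<le> lk (\<gamma> + m) v" using pmle_add[of m \<gamma>] unfolding pmle_def .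
        ultimately have "\<gamma> + m \<notin> ks R" using R by blast
        hence "lk R (\<gamma> + m) = 0" by (simp add: in_keys_iff)
        hence "lk f (\<gamma> + m) = lk G \<gamma>" using fR
          by (simp add: lookup_add lookup_single_mult pmle_add add_minus_pm)
        thus ?thesis using True by (simp add: lookup_cmx m_def)
      next
        case False
        have "\<gamma> \<notin> ks G" using False vG unfolding vars_def by blast
        thus ?thesis using False by (simp add: lookup_cmx in_keys_iff)
      qed
    qed
  qed
  have "coeffM f P Q = (THE G. Pr G)" unfolding coeffM_def Let_def Pr_def V_def m_def by (rule refl)
  also have "\<dots> = ?G" using the_equality[of Pr, OF ex uniq] .
  finally show ?thesis by (simp only: V_def)
qed

lemma keys_mult_nat_pm: "x \<in> ks (p * q) \<Longrightarrow> \<exists>a b. x = a + b \<and> a \<in> ks p \<and> b \<in> ks q"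
  for p q :: "'a::comm_semiring_1 mpoly"
  using keys_mult[of p q] by blast

definition part :: "var set \<Rightarrow> 'a::zero mpoly \<Rightarrow> 'a mpoly" where
  "part V f = Abs_poly_mapping (\<lambda>\<alpha>. if ks \<alpha> = V then lk f \<alpha> else 0)"

lemma lookup_part: "lk (part V f) \<alpha> = (if ks \<alpha> = V then lk f \<alpha> else 0)"
proof -
  have "{\<alpha>. (if ks \<alpha> = V then lk f \<alpha> else 0) \<noteq> 0} \<subseteq> ks f" by (auto simp: in_keys_iff)
  hence "finite {\<alpha>. (if ks \<alpha> = V then lk f \<alpha> else 0) \<noteq> 0}" by (rule finite_subset) simp
  thus ?thesis unfolding part_def by simp
qed

lemma part_cmx:
  assumes fV: "finite V"
  shows "part V f = sg (mlmon V) 1 * cmx f V"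
proof (rule poly_mapping_eqI)
  fix \<alpha>
  define m where "m = mlmon V"
  have km: "ks m = V" unfolding m_def using keys_mlmon[OF fV] .
  have lm: "\<And>v. lk m v = (if v \<in> V then 1 else 0)" unfolding m_def using lookup_mlmon[OF fV] .
  show "lk (part V f) \<alpha> = lk (sg (mlmon V) 1 * cmx f V) \<alpha>"
  proof (cases "ks \<alpha> = V")
    case True
    have p: "pmle m \<alpha>" unfolding pmle_def
    proof
      fix v show "lk m v \<le> lk \<alpha> v"
        using True lm[of v] by (cases "v \<in> V") (auto simp: in_keys_iff Suc_le_eq)
    qed
    have "ks (\<alpha> - m) \<subseteq> V" using True keys_minus_nat[of \<alpha> m] by simp
    thus ?thesis using True p unfolding lookup_part lookup_single_mult lookup_cmx m_def[symmetric]
      by (simp add: minus_add_pm)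
  next
    case False
    have "\<not> (pmle m \<alpha> \<and> ks (\<alpha> - m) \<subseteq> V)"
    proof
      assume a: "pmle m \<alpha> \<and> ks (\<alpha> - m) \<subseteq> V"
      have "V \<subseteq> ks \<alpha>"
      proof
        fix v assume "v \<in> V" thus "v \<in> ks \<alpha>" using a lm[of v] unfolding pmle_def in_keys_iff
          by (metis le_zero_eq one_neq_zero)
      qed
      moreover have "ks \<alpha> \<subseteq> V"
      proof -
        have "\<alpha> = (\<alpha> - m) + m" using minus_add_pm[of m \<alpha>] a by simp
        hence "ks \<alpha> = ks (\<alpha> - m) \<union> ks m" using keys_add_nat by metis
        thus ?thesis using a km by blast
      qed
      ultimately show False using False by blast
    qed
    thus ?thesis using False unfolding lookup_part lookup_single_mult lookup_cmx m_def[symmetric]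
      by auto
  qed
qed

lemma part_sum: "part V (\<Sum>i\<in>I. p i) = (\<Sum>i\<in>I. part V (p i))"
  by (rule poly_mapping_eqI) (simp add: lookup_part lookup_sum)

lemma part_add: "part V (p + q) = part V p + part V q"
  by (rule poly_mapping_eqI) (simp add: lookup_part lookup_add)

lemma part_zero: "part V 0 = 0"
  by (rule poly_mapping_eqI) (simp add: lookup_part)

lemma parts_decomp:
  assumes "finite \<V>" "ks ` ks f \<subseteq> \<V>"
  shows "f = (\<Sum>V\<in>\<V>. part V f)"
proof (rule poly_mapping_eqI)
  fix \<alpha>
  have "(\<Sum>V\<in>\<V>. lk (part V f) \<alpha>) = (\<Sum>V\<in>\<V>. if ks \<alpha> = V then lk f \<alpha> else 0)"
    by (simp add: lookup_part)
  also have "\<dots> = (if ks \<alpha> \<in> \<V> then lk f \<alpha> else 0)" using assms(1) by (simp add: sum.delta)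
  also have "\<dots> = lk f \<alpha>"
  proof (cases "\<alpha> \<in> ks f")
    case True
    hence "ks \<alpha> \<in> \<V>" using assms(2) by blast
    thus ?thesis by simp
  next
    case False thus ?thesis by (simp add: in_keys_iff)
  qed
  finally show "lk f \<alpha> = lk (\<Sum>V\<in>\<V>. part V f) \<alpha>" by (simp add: lookup_sum)
qed

lemma part_homog:
  assumes "\<forall>\<alpha>\<in>ks p. ks \<alpha> = X"
  shows "part V p = (if X = V then p else 0)"
proof (rule poly_mapping_eqI)
  fix \<alpha>
  show "lk (part V p) \<alpha> = lk (if X = V then p else 0) \<alpha>"
    using assms by (cases "\<alpha> \<in> ks p") (auto simp: lookup_part in_keys_iff)
qed

lemma keys_part_mult:
  fixes f g :: "'a::comm_semiring_1 mpoly"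
  shows "\<forall>\<alpha>\<in>ks (part U f * part W g). ks \<alpha> = U \<union> W"
proof
  fix \<alpha> assume "\<alpha> \<in> ks (part U f * part W g)"
  then obtain a b where ab: "\<alpha> = a + b" "a \<in> ks (part U f)" "b \<in> ks (part W g)"
    using keys_mult_nat_pm by blast
  have "ks a = U" using ab(2) by (auto simp: in_keys_iff lookup_part split: if_splits)
  moreover have "ks b = W" using ab(3) by (auto simp: in_keys_iff lookup_part split: if_splits)
  ultimately show "ks \<alpha> = U \<union> W" using ab(1) keys_add_nat by simp
qed

lemma mlmon_union:
  assumes "finite U" "finite W"
  shows "mlmon U + mlmon W = mlmon (U \<union> W) + mlmon (U \<inter> W)"
  by (rule poly_mapping_eqI) (simp add: lookup_add lookup_mlmon assms)

lemma single_mult_cancel: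
  fixes p q :: "'a::comm_ring_1 mpoly"
  assumes "sg m 1 * p = sg m 1 * q"
  shows "p = q"
proof (rule poly_mapping_eqI)
  fix \<gamma>
  have "lk (sg m (1::'a) * p) (\<gamma> + m) = lk (sg m (1::'a) * q) (\<gamma> + m)" using assms by simp
  thus "lk p \<gamma> = lk q \<gamma>" unfolding lookup_single_mult by (simp add: pmle_add add_minus_pm)
qed

lemma cmx_mult:
  fixes f g :: "'a::comm_ring_1 mpoly"
  assumes fV: "finite V"
  shows "cmx (f * g) V = (\<Sum>U\<in>Pow V. \<Sum>W\<in>Pow V.
     if U \<union> W = V then sg (mlmon (U \<inter> W)) 1 * cmx f U * cmx g W else 0)"
proof -
  define \<V> where "\<V> = Pow V \<union> ks ` ks f \<union> ks ` ks g"
  have fin: "finite \<V>" unfolding \<V>_def using fV by simp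
  have PV: "Pow V \<subseteq> \<V>" unfolding \<V>_def by blast
  have df: "f = (\<Sum>U\<in>\<V>. part U f)" by (rule parts_decomp[OF fin]) (auto simp: \<V>_def)
  have dg: "g = (\<Sum>W\<in>\<V>. part W g)" by (rule parts_decomp[OF fin]) (auto simp: \<V>_def)
  have "f * g = (\<Sum>U\<in>\<V>. \<Sum>W\<in>\<V>. part U f * part W g)"
    by (subst df, subst dg) (simp add: sum_product)
  hence "part V (f * g) = (\<Sum>U\<in>\<V>. \<Sum>W\<in>\<V>. part V (part U f * part W g))"
    by (simp add: part_sum)
  also have "\<dots> = (\<Sum>U\<in>\<V>. \<Sum>W\<in>\<V>. if U \<union> W = V then part U f * part W g else 0)"
    by (simp add: part_homog[OF keys_part_mult])
  also have "\<dots> = (\<Sum>U\<in>Pow V. \<Sum>W\<in>\<V>. if U \<union> W = V then part U f * part W g else 0)"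
  proof (rule sum.mono_neutral_right[OF fin PV], rule ballI)
    fix U assume "U \<in> \<V> - Pow V"
    hence "\<forall>W. U \<union> W \<noteq> V" by blast
    thus "(\<Sum>W\<in>\<V>. if U \<union> W = V then part U f * part W g else 0) = 0" by simp
  qed
  also have "\<dots> = (\<Sum>U\<in>Pow V. \<Sum>W\<in>Pow V. if U \<union> W = V then part U f * part W g else 0)"
    by (rule sum.cong[OF refl], rule sum.mono_neutral_right[OF fin PV]) auto
  also have "\<dots> = (\<Sum>U\<in>Pow V. \<Sum>W\<in>Pow V. sg (mlmon V) 1 *
       (if U \<union> W = V then sg (mlmon (U \<inter> W)) 1 * cmx f U * cmx g W else 0))"
  proof (rule sum.cong[OF refl], rule sum.cong[OF refl])
    fix U W assume U: "U \<in> Pow V" and W: "W \<in> Pow V"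
    have fU: "finite U" and fW: "finite W" using U W fV finite_subset by auto
    show "(if U \<union> W = V then part U f * part W g else 0) = sg (mlmon V) 1 *
       (if U \<union> W = V then sg (mlmon (U \<inter> W)) 1 * cmx f U * cmx g W else 0)"
    proof (cases "U \<union> W = V")
      case True
      have "part U f * part W g = sg (mlmon U) 1 * cmx f U * (sg (mlmon W) 1 * cmx g W)"
        by (subst part_cmx[OF fU], subst part_cmx[OF fW], rule refl)
      also have "\<dots> = (sg (mlmon U) 1 * sg (mlmon W) 1) * (cmx f U * cmx g W)"
        by (simp add: mult_ac)
      also have "\<dots> = (sg (mlmon V) 1 * sg (mlmon (U \<inter> W)) 1) * (cmx f U * cmx g W)"
      proof -
        have "sg (mlmon U) 1 * sg (mlmon W) (1::'a) = sg (mlmon V) 1 * sg (mlmon (U \<inter> W)) 1"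
          using mlmon_union[OF fU fW] True by (simp add: mult_single)
        thus ?thesis by simp
      qed
      also have "\<dots> = sg (mlmon V) 1 * (sg (mlmon (U \<inter> W)) 1 * cmx f U * cmx g W)"
        by (simp only: mult.assoc)
      finally show ?thesis using True by simp
    qed simp
  qed
  also have "\<dots> = sg (mlmon V) 1 * (\<Sum>U\<in>Pow V. \<Sum>W\<in>Pow V.
       if U \<union> W = V then sg (mlmon (U \<inter> W)) 1 * cmx f U * cmx g W else 0)"
    by (simp add: sum_distrib_left)
  finally show ?thesis unfolding part_cmx[OF fV] by (rule single_mult_cancel)
qed

definition mon :: "(var \<Rightarrow> 'a::comm_semiring_1) \<Rightarrow> (var \<Rightarrow>\<^sub>0 nat) \<Rightarrow> 'a" where
  "mon S \<alpha> = (\<Prod>v\<in>ks \<alpha>. S v ^ lk \<alpha> v)"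

lemma eval_mon: "eval S p = (\<Sum>\<alpha>\<in>ks p. lk p \<alpha> * mon S \<alpha>)"
  unfolding eval_def mon_def ..

lemma mon_superset: "finite K \<Longrightarrow> ks \<alpha> \<subseteq> K \<Longrightarrow> mon S \<alpha> = (\<Prod>v\<in>K. S v ^ lk \<alpha> v)"
  unfolding mon_def by (rule prod.mono_neutral_left) (auto simp: in_keys_iff)

lemma mon_add: "mon S (\<alpha> + \<beta>) = mon S \<alpha> * mon S \<beta>"
proof -
  define K where "K = ks \<alpha> \<union> ks \<beta>"
  have fK: "finite K" unfolding K_def by simp
  have "mon S (\<alpha> + \<beta>) = (\<Prod>v\<in>K. S v ^ lk (\<alpha> + \<beta>) v)"
    by (rule mon_superset[OF fK]) (simp add: K_def keys_add_nat)
  also have "\<dots> = (\<Prod>v\<in>K. S v ^ lk \<alpha> v) * (\<Prod>v\<in>K. S v ^ lk \<beta> v)"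
    by (simp add: lookup_add power_add prod.distrib)
  also have "\<dots> = mon S \<alpha> * mon S \<beta>"
    using mon_superset[OF fK, of \<alpha> S] mon_superset[OF fK, of \<beta> S] by (simp add: K_def)
  finally show ?thesis .
qed

lemma eval_superset: "finite F \<Longrightarrow> ks p \<subseteq> F \<Longrightarrow> eval S p = (\<Sum>\<alpha>\<in>F. lk p \<alpha> * mon S \<alpha>)"
  unfolding eval_mon by (rule sum.mono_neutral_left) (auto simp: in_keys_iff)

lemma eval_add: "eval S (p + q) = eval S p + eval S q"
proof -
  define F where "F = ks p \<union> ks q"
  have fF: "finite F" unfolding F_def by simp
  have "eval S (p + q) = (\<Sum>\<alpha>\<in>F. lk (p + q) \<alpha> * mon S \<alpha>)"
    by (rule eval_superset[OF fF]) (use keys_add[of p q] in \<open>simp add: F_def\<close>)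
  also have "\<dots> = (\<Sum>\<alpha>\<in>F. lk p \<alpha> * mon S \<alpha>) + (\<Sum>\<alpha>\<in>F. lk q \<alpha> * mon S \<alpha>)"
    by (simp add: lookup_add distrib_right sum.distrib)
  also have "\<dots> = eval S p + eval S q"
    using eval_superset[OF fF, of p S] eval_superset[OF fF, of q S] by (simp add: F_def)
  finally show ?thesis .
qed

lemma eval_zero: "eval S 0 = 0"
  by (simp add: eval_def)

lemma eval_sum: "eval S (\<Sum>i\<in>I. p i) = (\<Sum>i\<in>I. eval S (p i))"
  by (induction I rule: infinite_finite_induct) (simp_all add: eval_zero eval_add)

lemma eval_if: "eval S (if c then p else 0) = (if c then eval S p else 0)"
  by (simp add: eval_zero)

lemma eval_single: "eval S (sg \<alpha> c) = c * mon S \<alpha>"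
proof -
  have "eval S (sg \<alpha> c) = (\<Sum>\<beta>\<in>{\<alpha>}. lk (sg \<alpha> c) \<beta> * mon S \<beta>)"
    by (rule eval_superset) auto
  thus ?thesis by simp
qed

lemma pm_expand: "p = (\<Sum>\<alpha>\<in>ks p. sg \<alpha> (lk p \<alpha>))"
proof (rule poly_mapping_eqI)
  fix k
  have "(\<Sum>\<alpha>\<in>ks p. lk (sg \<alpha> (lk p \<alpha>)) k) = (\<Sum>\<alpha>\<in>ks p. if \<alpha> = k then lk p \<alpha> else 0)"
    by (simp add: lookup_single when_def)
  also have "\<dots> = lk p k" by (simp add: sum.delta' in_keys_iff)
  finally show "lk p k = lk (\<Sum>\<alpha>\<in>ks p. sg \<alpha> (lk p \<alpha>)) k" by (simp add: lookup_sum)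
qed

lemma eval_mult: "eval S (p * q) = eval S p * eval S (q :: 'a::comm_ring_1 mpoly)"
proof -
  have "p * q = (\<Sum>\<alpha>\<in>ks p. sg \<alpha> (lk p \<alpha>)) * (\<Sum>\<beta>\<in>ks q. sg \<beta> (lk q \<beta>))"
    by (subst pm_expand[of p], subst pm_expand[of q], rule refl)
  also have "\<dots> = (\<Sum>\<alpha>\<in>ks p. \<Sum>\<beta>\<in>ks q. sg (\<alpha> + \<beta>) (lk p \<alpha> * lk q \<beta>))"
    by (simp add: sum_product mult_single)
  finally have "eval S (p * q) = (\<Sum>\<alpha>\<in>ks p. \<Sum>\<beta>\<in>ks q. (lk p \<alpha> * mon S \<alpha>) * (lk q \<beta> * mon S \<beta>))"
    by (simp add: eval_sum eval_single mon_add mult_ac)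
  also have "\<dots> = eval S p * eval S q"
    unfolding eval_mon by (simp add: sum_product)
  finally show ?thesis .
qed

lemma cmx_add: "cmx (p + q) V = cmx p V + cmx q V"
  by (rule poly_mapping_eqI) (simp add: lookup_cmx lookup_add)

lemma cmx_zero: "cmx 0 V = 0"
  by (rule poly_mapping_eqI) (simp add: lookup_cmx)

lemma cmx_vanish:
  assumes fV: "finite V" and nv: "\<not> V \<subseteq> vars g"
  shows "cmx g V = 0"
proof (rule poly_mapping_eqI)
  fix \<gamma>
  show "lk (cmx g V) \<gamma> = lk 0 \<gamma>"
  proof (rule ccontr)
    assume "lk (cmx g V) \<gamma> \<noteq> lk 0 \<gamma>"
    hence "\<gamma> + mlmon V \<in> ks g" by (auto simp: lookup_cmx in_keys_iff split: if_splits)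
    moreover have "V \<subseteq> ks (\<gamma> + mlmon V)" using keys_mlmon[OF fV] keys_add_nat[of \<gamma> "mlmon V"] by simp
    ultimately have "V \<subseteq> vars g" unfolding vars_def by blast
    thus False using nv by simp
  qed
qed

definition VV :: "nat set \<Rightarrow> nat set \<Rightarrow> var set" where "VV A B = Yv ` A \<union> Zv ` B"

lemma VV_union: "VV A B \<union> VV A' B' = VV (A \<union> A') (B \<union> B')"
  unfolding VV_def by auto

lemma VV_inter: "VV A B \<inter> VV A' B' = VV (A \<inter> A') (B \<inter> B')"
  unfolding VV_def by auto

lemma VV_eq: "VV A B = VV A' B' \<longleftrightarrow> A = A' \<and> B = B'"
proof
  assume h: "VV A B = VV A' B'"
  have "A = {i. Yv i \<in> VV A B}" "A' = {i. Yv i \<in> VV A' B'}"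
       "B = {i. Zv i \<in> VV A B}" "B' = {i. Zv i \<in> VV A' B'}" unfolding VV_def by auto
  thus "A = A' \<and> B = B'" using h by metis
qed simp

lemma bij_VV: "bij_betw (\<lambda>x. VV (fst x) (snd x)) (Pow P \<times> Pow Q) (Pow (VV P Q))"
proof (rule bij_betwI')
  fix x y assume "x \<in> Pow P \<times> Pow Q" "y \<in> Pow P \<times> Pow Q"
  show "(VV (fst x) (snd x) = VV (fst y) (snd y)) = (x = y)"
    by (cases x, cases y) (simp add: VV_eq)
next
  fix x assume "x \<in> Pow P \<times> Pow Q"
  thus "VV (fst x) (snd x) \<in> Pow (VV P Q)" unfolding VV_def by auto
next
  fix U assume U: "U \<in> Pow (VV P Q)"
  define A where "A = {i. Yv i \<in> U}"
  define B where "B = {i. Zv i \<in> U}"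
  have "U = VV A B"
  proof
    show "U \<subseteq> VV A B"
    proof
      fix v assume "v \<in> U" thus "v \<in> VV A B" unfolding VV_def A_def B_def by (cases v) auto
    qed
  qed (auto simp: VV_def A_def B_def)
  moreover have "(A, B) \<in> Pow P \<times> Pow Q" using U unfolding A_def B_def VV_def by auto
  ultimately show "\<exists>x\<in>Pow P \<times> Pow Q. U = VV (fst x) (snd x)" by force
qed

lemma cmx_mult_PQ:
  fixes f g :: "'a::comm_ring_1 mpoly"
  assumes "finite P" "finite Q"
  shows "cmx (f * g) (VV P Q) = (\<Sum>(A,B)\<in>Pow P \<times> Pow Q. \<Sum>(A',B')\<in>Pow P \<times> Pow Q.
     if A \<union> A' = P \<and> B \<union> B' = Q then sg (mlmon (VV (A \<inter> A') (B \<inter> B'))) 1 * cmx f (VV A B) * cmx g (VV A' B') else 0)"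
proof -
  have fV: "finite (VV P Q)" using assms unfolding VV_def by simp
  define T where "T U W = (if U \<union> W = VV P Q then sg (mlmon (U \<inter> W)) 1 * cmx f U * cmx g W else 0)" for U W
  define h where "h = (\<lambda>x::nat set \<times> nat set. VV (fst x) (snd x))"
  have "cmx (f * g) (VV P Q) = (\<Sum>U\<in>Pow (VV P Q). \<Sum>W\<in>Pow (VV P Q). T U W)"
    unfolding T_def by (rule cmx_mult[OF fV])
  also have "\<dots> = (\<Sum>x\<in>Pow P \<times> Pow Q. \<Sum>W\<in>Pow (VV P Q). T (h x) W)"
    unfolding h_def by (rule sum.reindex_bij_betw[OF bij_VV, symmetric])
  also have "\<dots> = (\<Sum>x\<in>Pow P \<times> Pow Q. \<Sum>y\<in>Pow P \<times> Pow Q. T (h x) (h y))"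
    unfolding h_def by (rule sum.cong[OF refl], rule sum.reindex_bij_betw[OF bij_VV, symmetric])
  also have "\<dots> = (\<Sum>(A,B)\<in>Pow P \<times> Pow Q. \<Sum>(A',B')\<in>Pow P \<times> Pow Q.
     if A \<union> A' = P \<and> B \<union> B' = Q then sg (mlmon (VV (A \<inter> A') (B \<inter> B'))) 1 * cmx f (VV A B) * cmx g (VV A' B') else 0)"
    unfolding T_def h_def VV_inter by (simp add: case_prod_beta VV_union VV_eq)
  finally show ?thesis .
qed

definition ecm :: "(var \<Rightarrow> 'a::comm_ring_1) \<Rightarrow> 'a mpoly \<Rightarrow> nat set \<Rightarrow> nat set \<Rightarrow> 'a" where
  "ecm S f A B = eval S (cmx f (VV A B))"

definition emn :: "(var \<Rightarrow> 'a::comm_ring_1) \<Rightarrow> nat set \<Rightarrow> nat set \<Rightarrow> 'a" where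
  "emn S A B = mon S (mlmon (VV A B))"

lemma ecm_mult:
  fixes f g :: "'a::comm_ring_1 mpoly"
  assumes "finite P" "finite Q"
  shows "ecm S (f * g) P Q = (\<Sum>(A,B)\<in>Pow P \<times> Pow Q. \<Sum>(A',B')\<in>Pow P \<times> Pow Q.
     if A \<union> A' = P \<and> B \<union> B' = Q then emn S (A \<inter> A') (B \<inter> B') * ecm S f A B * ecm S g A' B' else 0)"
  unfolding ecm_def cmx_mult_PQ[OF assms] case_prod_beta eval_sum eval_if
  by (simp add: eval_mult eval_single emn_def cong: if_cong)

lemma sum_single:
  assumes "finite A" "a \<in> A" "\<And>x. x \<in> A \<Longrightarrow> x \<noteq> a \<Longrightarrow> f x = 0"
  shows "sum f A = f a"
proof -
  have "sum f A = f a + sum f (A - {a})" using sum.remove[OF assms(1,2)] .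
  also have "sum f (A - {a}) = 0" using assms(3) by (intro sum.neutral) auto
  finally show ?thesis by simp
qed

lemma collapseY:
  fixes E F G :: "nat set \<Rightarrow> nat set \<Rightarrow> 'a::comm_ring_1"
  assumes fP: "finite P" and fQ: "finite Q"
    and G0: "\<And>A' B'. A' \<subseteq> P \<Longrightarrow> B' \<subseteq> Q \<Longrightarrow> B' \<noteq> {} \<Longrightarrow> G A' B' = 0"
  shows "(\<Sum>(A,B)\<in>Pow P \<times> Pow Q. \<Sum>(A',B')\<in>Pow P \<times> Pow Q.
     if A \<union> A' = P \<and> B \<union> B' = Q then E (A \<inter> A') (B \<inter> B') * F A B * G A' B' else 0)
   = (\<Sum>A\<in>Pow P. (\<Sum>A'\<in>Pow P. if A \<union> A' = P then E (A \<inter> A') {} * G A' {} else 0) * F A Q)"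
proof -
  have inner: "(\<Sum>(A',B')\<in>Pow P \<times> Pow Q.
     if A \<union> A' = P \<and> B \<union> B' = Q then E (A \<inter> A') (B \<inter> B') * F A B * G A' B' else 0)
     = (\<Sum>A'\<in>Pow P. if A \<union> A' = P \<and> B = Q then E (A \<inter> A') {} * F A B * G A' {} else 0)" for A B
  proof -
    have "(\<Sum>(A',B')\<in>Pow P \<times> Pow Q.
     if A \<union> A' = P \<and> B \<union> B' = Q then E (A \<inter> A') (B \<inter> B') * F A B * G A' B' else 0)
     = (\<Sum>A'\<in>Pow P. \<Sum>B'\<in>Pow Q.
     if A \<union> A' = P \<and> B \<union> B' = Q then E (A \<inter> A') (B \<inter> B') * F A B * G A' B' else 0)"
      by (rule sum.cartesian_product[symmetric])
    also have "\<dots> = (\<Sum>A'\<in>Pow P. if A \<union> A' = P \<and> B = Q then E (A \<inter> A') {} * F A B * G A' {} else 0)"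
    proof (rule sum.cong[OF refl])
      fix A' assume A': "A' \<in> Pow P"
      have "(\<Sum>B'\<in>Pow Q. if A \<union> A' = P \<and> B \<union> B' = Q then E (A \<inter> A') (B \<inter> B') * F A B * G A' B' else 0)
        = (if A \<union> A' = P \<and> B \<union> {} = Q then E (A \<inter> A') (B \<inter> {}) * F A B * G A' {} else 0)"
        by (rule sum_single) (use fQ A' G0 in auto)
      thus "(\<Sum>B'\<in>Pow Q. if A \<union> A' = P \<and> B \<union> B' = Q then E (A \<inter> A') (B \<inter> B') * F A B * G A' B' else 0)
        = (if A \<union> A' = P \<and> B = Q then E (A \<inter> A') {} * F A B * G A' {} else 0)" by (simp cong: if_cong)
    qed
    finally show ?thesis .
  qed
  have "(\<Sum>(A,B)\<in>Pow P \<times> Pow Q. \<Sum>(A',B')\<in>Pow P \<times> Pow Q.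
     if A \<union> A' = P \<and> B \<union> B' = Q then E (A \<inter> A') (B \<inter> B') * F A B * G A' B' else 0)
    = (\<Sum>(A,B)\<in>Pow P \<times> Pow Q. \<Sum>A'\<in>Pow P. if A \<union> A' = P \<and> B = Q then E (A \<inter> A') {} * F A B * G A' {} else 0)"
  proof (rule sum.cong[OF refl])
    fix x :: "nat set \<times> nat set"
    obtain A B where x: "x = (A, B)" by (cases x)
    show "(case x of (A, B) \<Rightarrow> \<Sum>(A',B')\<in>Pow P \<times> Pow Q.
     if A \<union> A' = P \<and> B \<union> B' = Q then E (A \<inter> A') (B \<inter> B') * F A B * G A' B' else 0) =
      (case x of (A, B) \<Rightarrow> \<Sum>A'\<in>Pow P. if A \<union> A' = P \<and> B = Q then E (A \<inter> A') {} * F A B * G A' {} else 0)"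
      unfolding x prod.case by (rule inner)
  qed
  also have "\<dots> = (\<Sum>A\<in>Pow P. \<Sum>B\<in>Pow Q. \<Sum>A'\<in>Pow P. if A \<union> A' = P \<and> B = Q then E (A \<inter> A') {} * F A B * G A' {} else 0)"
    by (rule sum.cartesian_product[symmetric])
  also have "\<dots> = (\<Sum>A\<in>Pow P. \<Sum>A'\<in>Pow P. if A \<union> A' = P \<and> Q = Q then E (A \<inter> A') {} * F A Q * G A' {} else 0)"
    by (rule sum.cong[OF refl], rule sum_single) (use fQ in auto)
  also have "\<dots> = (\<Sum>A\<in>Pow P. (\<Sum>A'\<in>Pow P. (if A \<union> A' = P then E (A \<inter> A') {} * G A' {} else 0) * F A Q))"
    by (rule sum.cong[OF refl], rule sum.cong[OF refl]) (simp add: mult_ac)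
  also have "\<dots> = (\<Sum>A\<in>Pow P. (\<Sum>A'\<in>Pow P. if A \<union> A' = P then E (A \<inter> A') {} * G A' {} else 0) * F A Q)"
    by (simp add: sum_distrib_right)
  finally show ?thesis .
qed

lemma collapseZ:
  fixes E F H :: "nat set \<Rightarrow> nat set \<Rightarrow> 'a::comm_ring_1"
  assumes fP: "finite P" and fQ: "finite Q"
    and H0: "\<And>A' B'. A' \<subseteq> P \<Longrightarrow> B' \<subseteq> Q \<Longrightarrow> A' \<noteq> {} \<Longrightarrow> H A' B' = 0"
  shows "(\<Sum>(A,B)\<in>Pow P \<times> Pow Q. \<Sum>(A',B')\<in>Pow P \<times> Pow Q.
     if A \<union> A' = P \<and> B \<union> B' = Q then E (A \<inter> A') (B \<inter> B') * F A B * H A' B' else 0)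
   = (\<Sum>B\<in>Pow Q. F P B * (\<Sum>B'\<in>Pow Q. if B \<union> B' = Q then E {} (B \<inter> B') * H {} B' else 0))"
proof -
  have inner: "(\<Sum>(A',B')\<in>Pow P \<times> Pow Q.
     if A \<union> A' = P \<and> B \<union> B' = Q then E (A \<inter> A') (B \<inter> B') * F A B * H A' B' else 0)
     = (\<Sum>B'\<in>Pow Q. if A = P \<and> B \<union> B' = Q then E {} (B \<inter> B') * F A B * H {} B' else 0)" for A B
  proof -
    have "(\<Sum>(A',B')\<in>Pow P \<times> Pow Q.
     if A \<union> A' = P \<and> B \<union> B' = Q then E (A \<inter> A') (B \<inter> B') * F A B * H A' B' else 0)
     = (\<Sum>A'\<in>Pow P. \<Sum>B'\<in>Pow Q.
     if A \<union> A' = P \<and> B \<union> B' = Q then E (A \<inter> A') (B \<inter> B') * F A B * H A' B' else 0)"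
      by (rule sum.cartesian_product[symmetric])
    also have "\<dots> = (\<Sum>B'\<in>Pow Q.
     if A \<union> {} = P \<and> B \<union> B' = Q then E (A \<inter> {}) (B \<inter> B') * F A B * H {} B' else 0)"
    proof (rule sum_single)
      fix A' assume A': "A' \<in> Pow P" "A' \<noteq> {}"
      show "(\<Sum>B'\<in>Pow Q. if A \<union> A' = P \<and> B \<union> B' = Q then E (A \<inter> A') (B \<inter> B') * F A B * H A' B' else 0) = 0"
      proof (rule sum.neutral, rule ballI)
        fix B' assume "B' \<in> Pow Q"
        hence "H A' B' = 0" using H0 A' by blast
        thus "(if A \<union> A' = P \<and> B \<union> B' = Q then E (A \<inter> A') (B \<inter> B') * F A B * H A' B' else 0) = 0" by simp
      qed
    qed (use fP in auto)
    finally show ?thesis by (simp cong: if_cong)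
  qed
  have "(\<Sum>(A,B)\<in>Pow P \<times> Pow Q. \<Sum>(A',B')\<in>Pow P \<times> Pow Q.
     if A \<union> A' = P \<and> B \<union> B' = Q then E (A \<inter> A') (B \<inter> B') * F A B * H A' B' else 0)
    = (\<Sum>(A,B)\<in>Pow P \<times> Pow Q. \<Sum>B'\<in>Pow Q. if A = P \<and> B \<union> B' = Q then E {} (B \<inter> B') * F A B * H {} B' else 0)"
  proof (rule sum.cong[OF refl])
    fix x :: "nat set \<times> nat set"
    obtain A B where x: "x = (A, B)" by (cases x)
    show "(case x of (A, B) \<Rightarrow> \<Sum>(A',B')\<in>Pow P \<times> Pow Q.
     if A \<union> A' = P \<and> B \<union> B' = Q then E (A \<inter> A') (B \<inter> B') * F A B * H A' B' else 0) =
      (case x of (A, B) \<Rightarrow> \<Sum>B'\<in>Pow Q. if A = P \<and> B \<union> B' = Q then E {} (B \<inter> B') * F A B * H {} B' else 0)"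
      unfolding x prod.case by (rule inner)
  qed
  also have "\<dots> = (\<Sum>A\<in>Pow P. \<Sum>B\<in>Pow Q. \<Sum>B'\<in>Pow Q. if A = P \<and> B \<union> B' = Q then E {} (B \<inter> B') * F A B * H {} B' else 0)"
    by (rule sum.cartesian_product[symmetric])
  also have "\<dots> = (\<Sum>B\<in>Pow Q. \<Sum>B'\<in>Pow Q. if P = P \<and> B \<union> B' = Q then E {} (B \<inter> B') * F P B * H {} B' else 0)"
    by (rule sum_single) (use fP in \<open>auto intro!: sum.neutral\<close>)
  also have "\<dots> = (\<Sum>B\<in>Pow Q. (\<Sum>B'\<in>Pow Q. F P B * (if B \<union> B' = Q then E {} (B \<inter> B') * H {} B' else 0)))"
    by (rule sum.cong[OF refl], rule sum.cong[OF refl]) (simp add: mult_ac)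
  also have "\<dots> = (\<Sum>B\<in>Pow Q. F P B * (\<Sum>B'\<in>Pow Q. if B \<union> B' = Q then E {} (B \<inter> B') * H {} B' else 0))"
    by (simp add: sum_distrib_left)
  finally show ?thesis .
qed

lemma idx_bij: "bij_betw (idxset m) {..<2^m} (Pow {..<m})"
proof -
  have inj: "inj_on (idxset m) {..<2^m}"
  proof (rule inj_onI)
    fix j j' assume j: "j \<in> {..<2^m}" "j' \<in> {..<2^m}" "idxset m j = idxset m j'"
    have b: "bit j i = bit j' i" for i
    proof (cases "i < m")
      case True
      have "i \<in> idxset m j \<longleftrightarrow> i \<in> idxset m j'" using j(3) by simp
      thus ?thesis using True by (simp add: idxset_def)
    next
      case False
      have "take_bit m j = j" "take_bit m j' = j'" using j(1,2) by (simp_all add: take_bit_nat_eq_self_iff)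
      hence "bit j i = bit (take_bit m j) i" "bit j' i = bit (take_bit m j') i" by simp_all
      thus ?thesis using False by (simp add: bit_take_bit_iff)
    qed
    show "j = j'" using b by (simp add: bit_eq_iff)
  qed
  have img: "idxset m ` {..<2^m} \<subseteq> Pow {..<m}" by (auto simp: idxset_def)
  have card: "card (idxset m ` {..<2^m}) = card (Pow {..<m})"
    using card_image[OF inj] by (simp add: card_Pow)
  have "idxset m ` {..<2^m} = Pow {..<m}" by (rule card_subset_eq[OF _ img card]) simp
  thus ?thesis using inj unfolding bij_betw_def by simp
qed

lemma idx_sub: "idxset m k \<subseteq> {..<m}" by (auto simp: idxset_def)
lemma idx_fin: "finite (idxset m k)" using idx_sub finite_subset by blast

lemma sum_idx: "(\<Sum>j\<in>{..<2^m}. h (idxset m j)) = (\<Sum>A\<in>Pow {..<m}. h A)"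
  by (rule sum.reindex_bij_betw[OF idx_bij])

lemma mult_entry:
  fixes X Y :: "'a::comm_ring_1 mat"
  assumes "X \<in> carrier_mat n p" "Y \<in> carrier_mat p q" "k < n" "l < q"
  shows "(X * Y) $$ (k, l) = (\<Sum>j\<in>{..<p}. X $$ (k, j) * Y $$ (j, l))"
  using assms by (auto simp: scalar_prod_def atLeast0LessThan intro!: sum.cong)

lemma Meval_carrier: "Meval m f S \<in> carrier_mat (2^m) (2^m)"
  unfolding Meval_def by simp

lemma Meval_entry: "k < 2^m \<Longrightarrow> l < 2^m \<Longrightarrow> Meval m f S $$ (k, l) = ecm S f (idxset m k) (idxset m l)"
  unfolding Meval_def ecm_def by (simp add: coeffM_cmx idx_fin VV_def)

definition aY :: "(var \<Rightarrow> 'a::field) \<Rightarrow> 'a mpoly \<Rightarrow> nat set \<Rightarrow> nat set \<Rightarrow> 'a" where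
  "aY S g P A = (\<Sum>A'\<in>Pow P. if A \<union> A' = P then emn S (A \<inter> A') {} * ecm S g A' {} else 0)"

definition MY :: "nat \<Rightarrow> (var \<Rightarrow> 'a::field) \<Rightarrow> 'a mpoly \<Rightarrow> 'a mat" where
  "MY m S g = mat (2^m) (2^m) (\<lambda>(k, j). aY S g (idxset m k) (idxset m j))"

definition bZ :: "(var \<Rightarrow> 'a::field) \<Rightarrow> 'a mpoly \<Rightarrow> nat set \<Rightarrow> nat set \<Rightarrow> 'a" where
  "bZ S h B Q = (\<Sum>B'\<in>Pow Q. if B \<union> B' = Q then emn S {} (B \<inter> B') * ecm S h {} B' else 0)"

definition MZ :: "nat \<Rightarrow> (var \<Rightarrow> 'a::field) \<Rightarrow> 'a mpoly \<Rightarrow> 'a mat" where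
  "MZ m S h = mat (2^m) (2^m) (\<lambda>(j, l). bZ S h (idxset m j) (idxset m l))"

lemma Meval_Y:
  fixes f g :: "'a::field mpoly"
  assumes g: "vars g \<subseteq> Yvars m"
  shows "Meval m (f * g) S = MY m S g * Meval m f S"
proof (rule eq_matI)
  show "dim_row (Meval m (f * g) S) = dim_row (MY m S g * Meval m f S)" by (simp add: Meval_def MY_def)
  show "dim_col (Meval m (f * g) S) = dim_col (MY m S g * Meval m f S)" by (simp add: Meval_def MY_def)
  fix k l assume "k < dim_row (MY m S g * Meval m f S)" "l < dim_col (MY m S g * Meval m f S)"
  hence k: "k < 2^m" and l: "l < 2^m" by (simp_all add: Meval_def MY_def)
  define P where "P = idxset m k"
  define Q where "Q = idxset m l"
  have fP: "finite P" and fQ: "finite Q" unfolding P_def Q_def by (simp_all add: idx_fin)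
  have Psub: "P \<subseteq> {..<m}" unfolding P_def by (rule idx_sub)
  have G0: "ecm S g A' B' = 0" if "A' \<subseteq> P" "B' \<subseteq> Q" "B' \<noteq> {}" for A' B'
  proof -
    have fV: "finite (VV A' B')" using that fP fQ finite_subset unfolding VV_def by blast
    from that(3) obtain b where b: "b \<in> B'" by blast
    have "Zv b \<in> VV A' B'" using b unfolding VV_def by blast
    moreover have "Zv b \<notin> vars g" using g unfolding Yvars_def by blast
    ultimately have "\<not> VV A' B' \<subseteq> vars g" by blast
    hence "cmx g (VV A' B') = 0" by (rule cmx_vanish[OF fV])
    thus ?thesis unfolding ecm_def by (simp add: eval_zero)
  qed
  have "Meval m (f * g) S $$ (k, l) = ecm S (f * g) P Q" unfolding P_def Q_def by (rule Meval_entry[OF k l])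
  also have "\<dots> = (\<Sum>A\<in>Pow P. (\<Sum>A'\<in>Pow P. if A \<union> A' = P then emn S (A \<inter> A') {} * ecm S g A' {} else 0) * ecm S f A Q)"
    unfolding ecm_mult[OF fP fQ] by (rule collapseY[OF fP fQ G0])
  also have "\<dots> = (\<Sum>A\<in>Pow P. aY S g P A * ecm S f A Q)" unfolding aY_def ..
  also have "\<dots> = (\<Sum>A\<in>Pow {..<m}. aY S g P A * ecm S f A Q)"
  proof (rule sum.mono_neutral_left)
    show "Pow P \<subseteq> Pow {..<m}" using Psub by blast
    show "\<forall>A\<in>Pow {..<m} - Pow P. aY S g P A * ecm S f A Q = 0"
    proof
      fix A assume "A \<in> Pow {..<m} - Pow P"
      hence "\<forall>A'. A \<union> A' \<noteq> P" by blast
      thus "aY S g P A * ecm S f A Q = 0" unfolding aY_def by simp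
    qed
  qed simp
  also have "\<dots> = (\<Sum>j\<in>{..<2^m}. aY S g P (idxset m j) * ecm S f (idxset m j) Q)"
    by (rule sum_idx[symmetric])
  also have "\<dots> = (\<Sum>j\<in>{..<2^m}. MY m S g $$ (k, j) * Meval m f S $$ (j, l))"
    by (rule sum.cong) (auto simp: MY_def P_def Q_def Meval_entry k l)
  also have "\<dots> = (MY m S g * Meval m f S) $$ (k, l)"
    by (rule mult_entry[symmetric, OF _ Meval_carrier k l]) (simp add: MY_def)
  finally show "Meval m (f * g) S $$ (k, l) = (MY m S g * Meval m f S) $$ (k, l)" .
qed

lemma Meval_Z:
  fixes f h :: "'a::field mpoly"
  assumes h: "vars h \<subseteq> Zvars m"
  shows "Meval m (f * h) S = Meval m f S * MZ m S h"
proof (rule eq_matI)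
  show "dim_row (Meval m (f * h) S) = dim_row (Meval m f S * MZ m S h)" by (simp add: Meval_def MZ_def)
  show "dim_col (Meval m (f * h) S) = dim_col (Meval m f S * MZ m S h)" by (simp add: Meval_def MZ_def)
  fix k l assume "k < dim_row (Meval m f S * MZ m S h)" "l < dim_col (Meval m f S * MZ m S h)"
  hence k: "k < 2^m" and l: "l < 2^m" by (simp_all add: Meval_def MZ_def)
  define P where "P = idxset m k"
  define Q where "Q = idxset m l"
  have fP: "finite P" and fQ: "finite Q" unfolding P_def Q_def by (simp_all add: idx_fin)
  have Qsub: "Q \<subseteq> {..<m}" unfolding Q_def by (rule idx_sub)
  have H0: "ecm S h A' B' = 0" if "A' \<subseteq> P" "B' \<subseteq> Q" "A' \<noteq> {}" for A' B'
  proof -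
    have fV: "finite (VV A' B')" using that fP fQ finite_subset unfolding VV_def by blast
    from that(3) obtain a where a: "a \<in> A'" by blast
    have "Yv a \<in> VV A' B'" using a unfolding VV_def by blast
    moreover have "Yv a \<notin> vars h" using h unfolding Zvars_def by blast
    ultimately have "\<not> VV A' B' \<subseteq> vars h" by blast
    hence "cmx h (VV A' B') = 0" by (rule cmx_vanish[OF fV])
    thus ?thesis unfolding ecm_def by (simp add: eval_zero)
  qed
  have "Meval m (f * h) S $$ (k, l) = ecm S (f * h) P Q" unfolding P_def Q_def by (rule Meval_entry[OF k l])
  also have "\<dots> = (\<Sum>B\<in>Pow Q. ecm S f P B * (\<Sum>B'\<in>Pow Q. if B \<union> B' = Q then emn S {} (B \<inter> B') * ecm S h {} B' else 0))"
    unfolding ecm_mult[OF fP fQ] by (rule collapseZ[OF fP fQ H0])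
  also have "\<dots> = (\<Sum>B\<in>Pow Q. ecm S f P B * bZ S h B Q)" unfolding bZ_def ..
  also have "\<dots> = (\<Sum>B\<in>Pow {..<m}. ecm S f P B * bZ S h B Q)"
  proof (rule sum.mono_neutral_left)
    show "Pow Q \<subseteq> Pow {..<m}" using Qsub by blast
    show "\<forall>B\<in>Pow {..<m} - Pow Q. ecm S f P B * bZ S h B Q = 0"
    proof
      fix B assume "B \<in> Pow {..<m} - Pow Q"
      hence "\<forall>B'. B \<union> B' \<noteq> Q" by blast
      thus "ecm S f P B * bZ S h B Q = 0" unfolding bZ_def by simp
    qed
  qed simp
  also have "\<dots> = (\<Sum>j\<in>{..<2^m}. ecm S f P (idxset m j) * bZ S h (idxset m j) Q)"
    by (rule sum_idx[symmetric])
  also have "\<dots> = (\<Sum>j\<in>{..<2^m}. Meval m f S $$ (k, j) * MZ m S h $$ (j, l))"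
    by (rule sum.cong) (auto simp: MZ_def P_def Q_def Meval_entry k l)
  also have "\<dots> = (Meval m f S * MZ m S h) $$ (k, l)"
    by (rule mult_entry[symmetric, OF Meval_carrier _ k l]) (simp add: MZ_def)
  finally show "Meval m (f * h) S $$ (k, l) = (Meval m f S * MZ m S h) $$ (k, l)" .
qed

lemma ecm_add: "ecm S (p + q) A B = ecm S p A B + ecm S q A B"
  unfolding ecm_def cmx_add eval_add ..

lemma ecm_zero: "ecm S 0 A B = 0"
  unfolding ecm_def cmx_zero eval_zero ..

lemma Meval_add: "Meval m (p + q) S = Meval m p S + Meval m q S"
  by (rule eq_matI) (auto simp: Meval_def coeffM_cmx idx_fin cmx_add eval_add)

lemma Meval_zero: "Meval m 0 S = 0\<^sub>m (2^m) (2^m)"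
  by (rule eq_matI) (auto simp: Meval_def coeffM_cmx idx_fin cmx_zero eval_zero)


lemma rank_term:
  fixes f gi hi :: "'a::field mpoly"
  assumes Y: "vars gi \<subseteq> Yvars m" and Z: "vars hi \<subseteq> Zvars m"
  shows "vec_space.rank (2^m) (Meval m (f * (gi * hi)) S) \<le> vec_space.rank (2^m) (Meval m f S)"
proof -
  have cY: "MY m S gi \<in> carrier_mat (2^m) (2^m)" by (simp add: MY_def)
  have cZ: "MZ m S hi \<in> carrier_mat (2^m) (2^m)" by (simp add: MZ_def)
  have cYM: "MY m S gi * Meval m f S \<in> carrier_mat (2^m) (2^m)" using cY Meval_carrier[of m f S] by (rule mult_carrier_mat)
  have "Meval m (f * (gi * hi)) S = Meval m (f * gi * hi) S" by (simp add: mult.assoc)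
  also have "\<dots> = Meval m (f * gi) S * MZ m S hi" by (rule Meval_Z[OF Z])
  also have "\<dots> = MY m S gi * Meval m f S * MZ m S hi" by (simp add: Meval_Y[OF Y])
  finally have eq: "Meval m (f * (gi * hi)) S = MY m S gi * Meval m f S * MZ m S hi" .
  have "vec_space.rank (2^m) (MY m S gi * Meval m f S * MZ m S hi) \<le> vec_space.rank (2^m) (MY m S gi * Meval m f S)"
    by (rule rank_mult_right_le[OF cYM cZ])
  also have "\<dots> \<le> vec_space.rank (2^m) (Meval m f S)"
    by (rule rank_mult_left_le[OF cY Meval_carrier])
  finally show ?thesis unfolding eq .
qed

lemma rank_sum:
  fixes f :: "'a::field mpoly" and gs hs :: "nat \<Rightarrow> 'a mpoly"
  assumes "\<And>i. i < r \<Longrightarrow> vars (gs i) \<subseteq> Yvars m" "\<And>i. i < r \<Longrightarrow> vars (hs i) \<subseteq> Zvars m"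
  shows "vec_space.rank (2^m) (Meval m (f * (\<Sum>i<r. gs i * hs i)) S) \<le> r * vec_space.rank (2^m) (Meval m f S)"
  using assms
proof (induction r)
  case 0
  show ?case by (simp add: Meval_zero vec_space.rank_0I)
next
  case (Suc r)
  have IH: "vec_space.rank (2^m) (Meval m (f * (\<Sum>i<r. gs i * hs i)) S) \<le> r * vec_space.rank (2^m) (Meval m f S)"
    using Suc.prems by (intro Suc.IH) auto
  have T: "vec_space.rank (2^m) (Meval m (f * (gs r * hs r)) S) \<le> vec_space.rank (2^m) (Meval m f S)"
    using Suc.prems by (intro rank_term) auto
  have eq: "Meval m (f * (\<Sum>i<Suc r. gs i * hs i)) S =
      Meval m (f * (\<Sum>i<r. gs i * hs i)) S + Meval m (f * (gs r * hs r)) S"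
    by (simp add: distrib_left Meval_add)
  have "vec_space.rank (2^m) (Meval m (f * (\<Sum>i<Suc r. gs i * hs i)) S) \<le>
     vec_space.rank (2^m) (Meval m (f * (\<Sum>i<r. gs i * hs i)) S) + vec_space.rank (2^m) (Meval m (f * (gs r * hs r)) S)"
    unfolding eq by (rule vec_space.rank_subadditive[OF Meval_carrier Meval_carrier])
  thus ?case using IH T by simp
qed

theorem corollary2:
  fixes m r :: nat and f g :: "'a::field mpoly"
    and gs hs :: "nat \<Rightarrow> 'a mpoly"
  assumes "vars f \<subseteq> Yvars m \<union> Zvars m"
    and "vars g \<subseteq> Yvars m \<union> Zvars m"
    and "\<And>i. i < r \<Longrightarrow> vars (gs i) \<subseteq> Yvars m"
    and "\<And>i. i < r \<Longrightarrow> vars (hs i) \<subseteq> Zvars m"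
    and "g = (\<Sum>i<r. gs i * hs i)"
  shows "maxrank m (f * g) \<le> r * maxrank m f"
proof -
  define X where "X = {vec_space.rank (2^m) (Meval m (f * g) S) | S. True}"
  define Y where "Y = {vec_space.rank (2^m) (Meval m f S) | S. True}"
  have finX: "finite X"
  proof (rule finite_subset)
    show "X \<subseteq> {..2^m}" unfolding X_def using vec_space.rank_le_nc[OF Meval_carrier] by auto
  qed simp
  have finY: "finite Y"
  proof (rule finite_subset)
    show "Y \<subseteq> {..2^m}" unfolding Y_def using vec_space.rank_le_nc[OF Meval_carrier] by auto
  qed simp
  have "X \<noteq> {}" unfolding X_def by blast
  hence "Max X \<in> X" using finX by (rule Max_in[rotated])
  then obtain S0 where S0: "Max X = vec_space.rank (2^m) (Meval m (f * g) S0)" unfolding X_def by blast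
  have "vec_space.rank (2^m) (Meval m (f * g) S0) \<le> r * vec_space.rank (2^m) (Meval m f S0)"
    unfolding assms(5) by (rule rank_sum[OF assms(3,4)])
  also have "vec_space.rank (2^m) (Meval m f S0) \<le> Max Y"
    by (rule Max_ge[OF finY]) (auto simp: Y_def)
  hence "r * vec_space.rank (2^m) (Meval m f S0) \<le> r * Max Y" by simp
  finally show ?thesis unfolding maxrank_def X_def[symmetric] Y_def[symmetric] using S0 by simp
qed

end
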